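(* Let $X\subseteq\mathbb{C}^n$ be a complex analytic variety with coordinates $z_1,\dots,z_n$, $x\in X$, $M$ an $\mathcal{O}_{X,x}$-submodule of $\mathcal{O}_{X,x}^p$ with matrix of generators $[M]$, and $k\in\mathbb{N}$. Then $(z_{t_1}-z'_{t_1})\cdots(z_{t_k}-z'_{t_k})\det(M_{IJ})\det(M'_{KL})\in I_{2k}(M_D)$ at $(x,x)$ for all $t_1,\dots,t_k\in\{1,\dots,n\}$ and all $k$-indexes $I,J,K,L$.
   Context: $\pi_1,\pi_2:X\times X\to X$ are projections. For an object $A$ on $X$, $A$ also denotes $A\circ\pi_1$ and $A'$ denotes $A\circ\pi_2$; so $z_i-z_i'=z_i\circ\pi_1-z_i\circ\pi_2$. For $k$-indexes $I,J$, $M_{IJ}$ is the $k\times k$ submatrix of $[M]$ with rows $I$ and columns $J$ (composed with $\pi_1$), and $M'_{KL}$ the submatrix with rows $K$, columns $L$ composed with $\pi_2$. $M_D$ is the submodule of $\mathcal{O}_{X\times X,(x,x)}^{2p}$ generated by $h_D=(h\circ\pi_1,h\circ\pi_2)$, $h\in M$, and $I_{2k}(M_D)$ is the ideal of its $2k\times 2k$ minors. *)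

theory Defs
  imports "HOL-Analysis.Analysis"
begin

text \<open>Holomorphic functions of several complex variables: complex-Frechet
  differentiable, i.e. real-differentiable with a complex-linear derivative.\<close>
definition cholo_on :: "(complex^'m) set \<Rightarrow> (complex^'m \<Rightarrow> complex) \<Rightarrow> bool" where
  "cholo_on U f \<longleftrightarrow> (\<forall>z\<in>U. \<exists>D. (f has_derivative D) (at z) \<and>
        (\<forall>c v. D (c *s v) = c * D v))"

definition analytic_variety :: "(complex^'n) set \<Rightarrow> bool" where
  "analytic_variety X \<longleftrightarrow> (\<forall>a\<in>X. \<exists>U F. open U \<and> a \<in> U \<and> finite F \<and>
        (\<forall>f\<in>F. cholo_on U f) \<and> X \<inter> U = {z\<in>U. \<forall>f\<in>F. f z = 0})"

text \<open>Representatives of elements of the local ring O_{X,x}: functions holomorphic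
  near x in the ambient space.\<close>
definition hol_germ :: "complex^'m \<Rightarrow> (complex^'m \<Rightarrow> complex) \<Rightarrow> bool" where
  "hol_germ x f \<longleftrightarrow> (\<exists>U. open U \<and> x \<in> U \<and> cholo_on U f)"

definition germ_eq :: "(complex^'m) set \<Rightarrow> complex^'m \<Rightarrow> (complex^'m \<Rightarrow> complex)
     \<Rightarrow> (complex^'m \<Rightarrow> complex) \<Rightarrow> bool" where
  "germ_eq X x f g \<longleftrightarrow> (\<exists>U. open U \<and> x \<in> U \<and> (\<forall>y\<in>U \<inter> X. f y = g y))"

text \<open>C^n x C^n is modelled as complex^('n + 'n); projections pi_1, pi_2.\<close>
definition pr1 :: "complex^('n + 'n) \<Rightarrow> complex^'n" where
  "pr1 w = (\<chi> i. w $ Inl i)"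
definition pr2 :: "complex^('n + 'n) \<Rightarrow> complex^'n" where
  "pr2 w = (\<chi> i. w $ Inr i)"
definition dg :: "complex^'n \<Rightarrow> complex^('n + 'n)" where
  "dg x = (\<chi> j. case j of Inl i \<Rightarrow> x $ i | Inr i \<Rightarrow> x $ i)"
definition prodset :: "(complex^'n) set \<Rightarrow> (complex^('n + 'n)) set" where
  "prodset X = {w. pr1 w \<in> X \<and> pr2 w \<in> X}"

definition detk :: "nat \<Rightarrow> (nat \<Rightarrow> nat \<Rightarrow> 'a::comm_ring_1) \<Rightarrow> 'a" where
  "detk k A = (\<Sum>\<sigma>\<in>{\<sigma>. \<sigma> permutes {..<k}}. of_int (sign \<sigma>) * (\<Prod>i<k. A i (\<sigma> i)))"

definition kindex :: "nat \<Rightarrow> nat \<Rightarrow> (nat \<Rightarrow> nat) \<Rightarrow> bool" where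
  "kindex k b I \<longleftrightarrow> (\<forall>a c. a < c \<and> c < k \<longrightarrow> I a < I c) \<and> (\<forall>a<k. I a < b)"

text \<open>Membership in the submodule M of O_{X,x}^p generated by the columns of the
  p x m matrix [M] = Mx (entry Mx i j, row i < p, column j < m).\<close>
definition inM :: "complex^'n \<Rightarrow> nat \<Rightarrow> nat \<Rightarrow> (nat \<Rightarrow> nat \<Rightarrow> complex^'n \<Rightarrow> complex)
     \<Rightarrow> (nat \<Rightarrow> complex^'n \<Rightarrow> complex) \<Rightarrow> bool" where
  "inM x p m Mx h \<longleftrightarrow> (\<exists>g. (\<forall>j<m. hol_germ x (g j)) \<and>
        (\<forall>i<p. h i = (\<lambda>z. \<Sum>j<m. g j z * Mx i j z)))"

text \<open>h_D = (h o pi_1, h o pi_2) in O^{2p}: row r < p gives h_r o pi_1,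
  row p + r gives h_r o pi_2.\<close>
definition hD :: "nat \<Rightarrow> (nat \<Rightarrow> complex^'n \<Rightarrow> complex) \<Rightarrow> complex^('n + 'n) \<Rightarrow> nat \<Rightarrow> complex" where
  "hD p h w r = (if r < p then h r (pr1 w) else h (r - p) (pr2 w))"

text \<open>Membership (at (x,x)) in I_{2k}(M_D), the ideal of O_{XxX,(x,x)} generated by the
  2k x 2k minors of the generating matrix of M_D whose columns are all h_D, h in M.\<close>
definition in_I2k_MD :: "(complex^'n) set \<Rightarrow> complex^'n \<Rightarrow> nat \<Rightarrow> nat \<Rightarrow>
     (nat \<Rightarrow> nat \<Rightarrow> complex^'n \<Rightarrow> complex) \<Rightarrow> nat \<Rightarrow> (complex^('n + 'n) \<Rightarrow> complex) \<Rightarrow> bool" where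
  "in_I2k_MD X x p m Mx k f \<longleftrightarrow>
     (\<exists>(N::nat) (a :: nat \<Rightarrow> complex^('n + 'n) \<Rightarrow> complex) (R :: nat \<Rightarrow> nat \<Rightarrow> nat)
        (C :: nat \<Rightarrow> nat \<Rightarrow> nat \<Rightarrow> complex^'n \<Rightarrow> complex). (\<forall>l<N. hol_germ (dg x) (a l)) \<and>
        (\<forall>l<N. kindex (2*k) (2*p) (R l)) \<and>
        (\<forall>l<N. \<forall>c<2*k. inM x p m Mx (C l c)) \<and>
        germ_eq (prodset X) (dg x) f
          (\<lambda>w. \<Sum>l<N. a l w * detk (2*k) (\<lambda>r c. hD p (C l c) w (R l r))))"

end

theory Submission
  imports Defs "Jordan_Normal_Form.Determinant"
begin

no_notation Matrix.vec_index (infixl "$" 100)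

lemma cholo_on_mono: "U \<subseteq> V \<Longrightarrow> cholo_on V f \<Longrightarrow> cholo_on U f"
  unfolding cholo_on_def by blast

lemma hol_germ_const: "hol_germ x (\<lambda>z. c)"
  unfolding hol_germ_def cholo_on_def
  by (rule exI[of _ UNIV]) (auto intro!: exI[of _ "\<lambda>_. 0"])

lemma hol_germ_nth: "hol_germ x (\<lambda>z. z $ i)"
  unfolding hol_germ_def cholo_on_def
  by (rule exI[of _ UNIV]) (auto intro!: exI[of _ "\<lambda>v. v $ i"] bounded_linear.has_derivative[OF bounded_linear_vec_nth])

lemma hol_germ_uminus: assumes "hol_germ x f" shows "hol_germ x (\<lambda>z. - f z)"
proof -
  obtain U where U: "open U" "x \<in> U" "cholo_on U f" using assms unfolding hol_germ_def by blast
  have "cholo_on U (\<lambda>z. - f z)"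
    unfolding cholo_on_def
  proof
    fix z assume "z \<in> U"
    then obtain D where D: "(f has_derivative D) (at z)" "\<forall>c v. D (c *s v) = c * D v"
      using U(3) unfolding cholo_on_def by blast
    show "\<exists>D. ((\<lambda>z. - f z) has_derivative D) (at z) \<and> (\<forall>c v. D (c *s v) = c * D v)"
      by (rule exI[of _ "\<lambda>v. - D v"]) (use D in \<open>auto intro: has_derivative_minus\<close>)
  qed
  then show ?thesis using U unfolding hol_germ_def by blast
qed

lemma hol_germ_mult: assumes "hol_germ x f" "hol_germ x g" shows "hol_germ x (\<lambda>z. f z * g z)"
proof -
  obtain U where U: "open U" "x \<in> U" "cholo_on U f" using assms unfolding hol_germ_def by blast
  obtain V where V: "open V" "x \<in> V" "cholo_on V g" using assms unfolding hol_germ_def by blast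
  have "cholo_on (U \<inter> V) (\<lambda>z. f z * g z)"
    unfolding cholo_on_def
  proof
    fix z assume z: "z \<in> U \<inter> V"
    then obtain D where D: "(f has_derivative D) (at z)" "\<forall>c v. D (c *s v) = c * D v"
      using U(3) unfolding cholo_on_def by blast
    obtain E where E: "(g has_derivative E) (at z)" "\<forall>c v. E (c *s v) = c * E v"
      using V(3) z unfolding cholo_on_def by blast
    show "\<exists>D'. ((\<lambda>z. f z * g z) has_derivative D') (at z) \<and> (\<forall>c v. D' (c *s v) = c * D' v)"
    proof (rule exI[of _ "\<lambda>h. f z * E h + D h * g z"], intro conjI allI)
      show "((\<lambda>z. f z * g z) has_derivative (\<lambda>h. f z * E h + D h * g z)) (at z)"
        by (rule has_derivative_mult[OF D(1) E(1)])
      fix c v show "f z * E (c *s v) + D (c *s v) * g z = c * (f z * E v + D v * g z)"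
        using D(2) E(2) by (simp add: algebra_simps)
    qed
  qed
  then show ?thesis using U V unfolding hol_germ_def by blast
qed

lemma hol_germ_prod: "finite A \<Longrightarrow> (\<forall>c\<in>A. hol_germ x (f c)) \<Longrightarrow> hol_germ x (\<lambda>z. \<Prod>c\<in>A. f c z)"
proof (induction A rule: finite_induct)
  case empty then show ?case by (simp add: hol_germ_const)
next
  case (insert a A)
  then show ?case by (simp add: hol_germ_mult)
qed

lemma detk_det: "detk k A = Determinant.det (Matrix.mat k k (\<lambda>(i,j). A i j))"
proof -
  have C: "Matrix.mat k k (\<lambda>(i,j). A i j) \<in> carrier_mat k k" by simp
  show ?thesis
    unfolding detk_def det_def'[OF C] lessThan_atLeast0
  proof (intro sum.cong refl arg_cong2[where f="(*)"] prod.cong)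
    fix p i assume "p \<in> {p. p permutes {0..<k}}" "i \<in> {0..<k}"
    then have "p i < k" by (simp add: permutes_in_image)
    then show "A i (p i) = Matrix.mat k k (\<lambda>(i,j). A i j) $$ (i, p i)" using \<open>i \<in> {0..<k}\<close> by simp
  qed
qed

lemma det_col_fun: "Determinant.det (Matrix.mat n n (\<lambda>(r,c). B r c)) =
   (\<Sum>p | p permutes {0..<n}. signof p * (\<Prod>j<n. B (p j) j))"
proof -
  have C: "Matrix.mat n n (\<lambda>(r,c). B r c) \<in> carrier_mat n n" by simp
  show ?thesis
    unfolding det_col[OF C]
  proof (intro sum.cong refl arg_cong2[where f="(*)"] prod.cong)
    fix p j assume "p \<in> {p. p permutes {0..<n}}" "j \<in> {..<n}"
    then have "p j < n" by (simp add: permutes_in_image)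
    then show "Matrix.mat n n (\<lambda>(r,c). B r c) $$ (p j, j) = B (p j) j" using \<open>j \<in> {..<n}\<close> by simp
  qed
qed

lemma det_multilin:
  assumes T: "finite T"
  shows "Determinant.det (Matrix.mat n n (\<lambda>(r,c). \<Sum>b\<in>T. \<alpha> c b * Q b r c)) =
    (\<Sum>s\<in>PiE {..<n} (\<lambda>_. T). (\<Prod>c<n. \<alpha> c (s c)) *
        Determinant.det (Matrix.mat n n (\<lambda>(r,c). Q (s c) r c)))"
proof -
  have "Determinant.det (Matrix.mat n n (\<lambda>(r,c). \<Sum>b\<in>T. \<alpha> c b * Q b r c)) =
     (\<Sum>p | p permutes {0..<n}. signof p * (\<Prod>j<n. \<Sum>b\<in>T. \<alpha> j b * Q b (p j) j))"
    by (rule det_col_fun)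
  also have "\<dots> = (\<Sum>p | p permutes {0..<n}. \<Sum>s\<in>PiE {..<n} (\<lambda>_. T).
        signof p * ((\<Prod>c<n. \<alpha> c (s c)) * (\<Prod>j<n. Q (s j) (p j) j)))"
    by (intro sum.cong refl, subst prod_sum_PiE) (use T in \<open>auto simp: sum_distrib_left prod.distrib\<close>)
  also have "\<dots> = (\<Sum>s\<in>PiE {..<n} (\<lambda>_. T). \<Sum>p | p permutes {0..<n}.
        signof p * ((\<Prod>c<n. \<alpha> c (s c)) * (\<Prod>j<n. Q (s j) (p j) j)))"
    by (rule sum.swap)
  also have "\<dots> = (\<Sum>s\<in>PiE {..<n} (\<lambda>_. T). (\<Prod>c<n. \<alpha> c (s c)) *
        Determinant.det (Matrix.mat n n (\<lambda>(r,c). Q (s c) r c)))"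
    unfolding det_col_fun by (intro sum.cong refl) (simp add: sum_distrib_left algebra_simps)
  finally show ?thesis .
qed

lemma det_colscale: "Determinant.det (Matrix.mat n n (\<lambda>(r,c). d c * B r c)) =
   (\<Prod>c<n. d c) * Determinant.det (Matrix.mat n n (\<lambda>(r,c). B r c))"
  unfolding det_col_fun by (simp add: sum_distrib_left prod.distrib algebra_simps)

lemma det_block: fixes A :: "nat \<Rightarrow> nat \<Rightarrow> 'a::idom"
  shows "Determinant.det (Matrix.mat (2*k) (2*k) (\<lambda>(r,c). if r<k then (if c<k then A r c else B r (c-k))
     else (if c<k then 0 else D (r-k) (c-k)))) =
   Determinant.det (Matrix.mat k k (\<lambda>(r,c). A r c)) * Determinant.det (Matrix.mat k k (\<lambda>(r,c). D r c))"
proof -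
  have eq: "Matrix.mat (2*k) (2*k) (\<lambda>(r,c). if r<k then (if c<k then A r c else B r (c-k))
     else (if c<k then 0 else D (r-k) (c-k))) = four_block_mat (Matrix.mat k k (\<lambda>(r,c). A r c))
       (Matrix.mat k k (\<lambda>(r,c). B r c)) (0\<^sub>m k k) (Matrix.mat k k (\<lambda>(r,c). D r c))"
    by (rule eq_matI) auto
  show ?thesis unfolding eq
    by (rule det_four_block_mat_lower_left_zero) auto
qed

definition QI :: "(complex^'n) set \<Rightarrow> complex^'n \<Rightarrow> nat \<Rightarrow> nat \<Rightarrow>
     (nat \<Rightarrow> nat \<Rightarrow> complex^'n \<Rightarrow> complex) \<Rightarrow> nat \<Rightarrow> (complex^('n + 'n) \<Rightarrow> complex) \<Rightarrow> bool" where
  "QI X x p m Mx k f \<longleftrightarrow>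
     (\<exists>(N::nat) (a :: nat \<Rightarrow> complex^('n + 'n) \<Rightarrow> complex) (R :: nat \<Rightarrow> nat \<Rightarrow> nat)
        (C :: nat \<Rightarrow> nat \<Rightarrow> nat \<Rightarrow> complex^'n \<Rightarrow> complex). (\<forall>l<N. hol_germ (dg x) (a l)) \<and>
        (\<forall>l<N. kindex (2*k) (2*p) (R l)) \<and>
        (\<forall>l<N. \<forall>c<2*k. inM x p m Mx (C l c)) \<and>
        f = (\<lambda>w. \<Sum>l<N. a l w * detk (2*k) (\<lambda>r c. hD p (C l c) w (R l r))))"

lemma QI_in: assumes "QI X x p m Mx k f" shows "in_I2k_MD X x p m Mx k f"
proof -
  obtain N a R C where H: "\<forall>l<(N::nat). hol_germ (dg x) (a l)" "\<forall>l<N. kindex (2*k) (2*p) (R l)"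
     "\<forall>l<N. \<forall>c<2*k. inM x p m Mx (C l c)"
     and f: "f = (\<lambda>w. \<Sum>l<N. a l w * detk (2*k) (\<lambda>r c. hD p (C l c) w (R l r)))"
    using assms unfolding QI_def apply (elim exE conjE) apply (rule that) apply assumption+ done
  have g: "germ_eq (prodset X) (dg x) f (\<lambda>w. \<Sum>l<N. a l w * detk (2*k) (\<lambda>r c. hD p (C l c) w (R l r)))"
    unfolding germ_eq_def f by (intro exI[of _ UNIV]) simp
  show ?thesis unfolding in_I2k_MD_def
    by (intro exI[of _ N] exI[of _ a] exI[of _ R] exI[of _ C] conjI H g)
qed

lemma QI_zero: "QI X x p m Mx k (\<lambda>w. 0)"
  unfolding QI_def by (rule exI[of _ 0]) auto

lemma QI_gen:
  assumes "hol_germ (dg x) b" "kindex (2*k) (2*p) R" "\<forall>c<2*k. inM x p m Mx (C c)"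
  shows "QI X x p m Mx k (\<lambda>w. b w * detk (2*k) (\<lambda>r c. hD p (C c) w (R r)))"
  unfolding QI_def
  by (rule exI[of _ 1], rule exI[of _ "\<lambda>_. b"], rule exI[of _ "\<lambda>_. R"], rule exI[of _ "\<lambda>_. C"])
    (use assms in simp)

lemma QI_add:
  assumes "QI X x p m Mx k f" "QI X x p m Mx k g"
  shows "QI X x p m Mx k (\<lambda>w. f w + g w)"
proof -
  obtain N1 a1 R1 C1 where 1: "\<forall>l<(N1::nat). hol_germ (dg x) (a1 l)" "\<forall>l<N1. kindex (2*k) (2*p) (R1 l)"
     "\<forall>l<N1. \<forall>c<2*k. inM x p m Mx (C1 l c)"
     "f = (\<lambda>w. \<Sum>l<N1. a1 l w * detk (2*k) (\<lambda>r c. hD p (C1 l c) w (R1 l r)))"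
    using assms(1) unfolding QI_def apply (elim exE conjE) apply (rule that) apply assumption+ done
  obtain N2 a2 R2 C2 where 2: "\<forall>l<(N2::nat). hol_germ (dg x) (a2 l)" "\<forall>l<N2. kindex (2*k) (2*p) (R2 l)"
     "\<forall>l<N2. \<forall>c<2*k. inM x p m Mx (C2 l c)"
     "g = (\<lambda>w. \<Sum>l<N2. a2 l w * detk (2*k) (\<lambda>r c. hD p (C2 l c) w (R2 l r)))"
    using assms(2) unfolding QI_def apply (elim exE conjE) apply (rule that) apply assumption+ done
  define a where "a l = (if l < N1 then a1 l else a2 (l - N1))" for l
  define R where "R l = (if l < N1 then R1 l else R2 (l - N1))" for l
  define C where "C l = (if l < N1 then C1 l else C2 (l - N1))" for l
  define F where "F l w = a l w * detk (2*k) (\<lambda>r c. hD p (C l c) w (R l r))" for l w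
  have s: "(\<Sum>l<N1+N2. F l w) = (\<Sum>l<N1. F l w) + (\<Sum>l<N2. F (N1 + l) w)" for w
    by (induction N2) auto
  have h1: "\<forall>l<N1 + N2. hol_germ (dg x) (a l)" proof (intro allI impI)
      fix l assume l: "l < N1 + N2"
      show "hol_germ (dg x) (a l)"
      proof (cases "l < N1")
        case True then show ?thesis using 1 unfolding a_def by simp
      next
        case False then have "l - N1 < N2" using l by simp
        then show ?thesis using 2 False unfolding a_def by simp
      qed
    qed
  have h2: "\<forall>l<N1 + N2. kindex (2*k) (2*p) (R l)" proof (intro allI impI)
      fix l assume l: "l < N1 + N2"
      show "kindex (2*k) (2*p) (R l)"
      proof (cases "l < N1")
        case True then show ?thesis using 1 unfolding R_def by simp
      next
        case False then have "l - N1 < N2" using l by simp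
        then show ?thesis using 2 False unfolding R_def by simp
      qed
    qed
  have h3: "\<forall>l<N1 + N2. \<forall>c<2*k. inM x p m Mx (C l c)" proof (rule allI, rule impI)
      fix l assume l: "l < N1 + N2"
      show "\<forall>c<2*k. inM x p m Mx (C l c)"
      proof (cases "l < N1")
        case True then show ?thesis using 1 unfolding C_def by simp
      next
        case False then have "l - N1 < N2" using l by simp
        then show ?thesis using 2 False unfolding C_def by simp
      qed
    qed
  have h4: "(\<lambda>w. f w + g w) = (\<lambda>w. \<Sum>l<N1 + N2. a l w * detk (2*k) (\<lambda>r c. hD p (C l c) w (R l r)))"
      using s unfolding F_def 1(4) 2(4) by (simp add: a_def R_def C_def)
  show ?thesis unfolding QI_def
    by (rule exI[of _ "N1+N2"], rule exI[of _ a], rule exI[of _ R], rule exI[of _ C]) (intro conjI h1 h2 h3 h4)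
qed

lemma QI_sum: "finite S \<Longrightarrow> (\<forall>s\<in>S. QI X x p m Mx k (F s)) \<Longrightarrow> QI X x p m Mx k (\<lambda>w. \<Sum>s\<in>S. F s w)"
proof (induction S rule: finite_induct)
  case empty then show ?case by (simp add: QI_zero)
next
  case (insert a S)
  then show ?case using QI_add[of X x p m Mx k "F a" "\<lambda>w. \<Sum>s\<in>S. F s w"] by simp
qed

lemma inM_col:
  assumes "j0 < m" "hol_germ x e"
  shows "inM x p m Mx (\<lambda>i z. e z * Mx i j0 z)"
  unfolding inM_def
proof (intro exI[of _ "\<lambda>j z. if j = j0 then e z else 0"] conjI allI impI)
  fix j assume "j < m"
  show "hol_germ x (\<lambda>z. if j = j0 then e z else 0)"
    by (cases "j = j0") (simp_all add: assms hol_germ_const)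
next
  fix i assume "i < p"
  show "(\<lambda>z. e z * Mx i j0 z) = (\<lambda>z. \<Sum>j<m. (if j = j0 then e z else 0) * Mx i j z)"
  proof
    fix z
    have "(\<Sum>j<m. (if j = j0 then e z else 0) * Mx i j z) = (\<Sum>j<m. if j = j0 then e z * Mx i j z else 0)"
      by (rule sum.cong) auto
    also have "\<dots> = e z * Mx i j0 z" using assms(1) by (simp add: sum.delta')
    finally show "e z * Mx i j0 z = (\<Sum>j<m. (if j = j0 then e z else 0) * Mx i j z)" by simp
  qed
qed

lemma inM_col1:
  assumes "j0 < m"
  shows "inM x p m Mx (\<lambda>i z. Mx i j0 z)"
  using inM_col[OF assms hol_germ_const[of x 1], where p=p and Mx=Mx] by simp

lemma hol_germ_pr2: "hol_germ y (\<lambda>w. - (pr2 w $ i))"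
proof -
  have "(\<lambda>w. - (pr2 w $ i)) = (\<lambda>w. - (w $ Inr i))" by (simp add: pr2_def)
  then show ?thesis using hol_germ_uminus[OF hol_germ_nth] by simp
qed

theorem lemma3p2:
  fixes X :: "(complex^'n) set" and x :: "complex^'n"
    and p m k :: nat and Mx :: "nat \<Rightarrow> nat \<Rightarrow> complex^'n \<Rightarrow> complex"
    and t :: "nat \<Rightarrow> 'n" and I J K L :: "nat \<Rightarrow> nat"
  assumes "analytic_variety X" and "x \<in> X"
    and "\<forall>i<p. \<forall>j<m. hol_germ x (Mx i j)"
    and "kindex k p I" and "kindex k m J" and "kindex k p K" and "kindex k m L"
  shows "in_I2k_MD X x p m Mx k
     (\<lambda>w. (\<Prod>a<k. pr1 w $ t a - pr2 w $ t a)
          * detk k (\<lambda>a b. Mx (I a) (J b) (pr1 w))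
          * detk k (\<lambda>a b. Mx (K a) (L b) (pr2 w)))"
proof -
  have I: "\<And>a c. a < c \<Longrightarrow> c < k \<Longrightarrow> I a < I c" "\<And>a. a < k \<Longrightarrow> I a < p"
    using assms(4) unfolding kindex_def by auto
  have J: "\<And>a. a < k \<Longrightarrow> J a < m" using assms(5) unfolding kindex_def by auto
  have K: "\<And>a c. a < c \<Longrightarrow> c < k \<Longrightarrow> K a < K c" "\<And>a. a < k \<Longrightarrow> K a < p"
    using assms(6) unfolding kindex_def by auto
  have L: "\<And>a. a < k \<Longrightarrow> L a < m" using assms(7) unfolding kindex_def by auto
  define R where "R r = (if r < k then I r else p + K (r - k))" for r
  define G where "G c j = (if c < k then (if j then (\<lambda>i z. z $ t c * Mx i (J c) z) else (\<lambda>i z. Mx i (J c) z))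
      else (\<lambda>i z. Mx i (L (c-k)) z))" for c and j :: bool
  define \<alpha> where "\<alpha> c j w = (if c < k then (if j then 1 else - (pr2 w $ t c)) else (if j then 1 else 0))"
    for c and j :: bool and w :: "complex^('n+'n)"
  have hR: "kindex (2*k) (2*p) R"
    unfolding kindex_def
  proof (intro conjI allI impI)
    fix a c assume ac: "a < c \<and> c < 2*k"
    show "R a < R c"
    proof (cases "c < k")
      case True then show ?thesis using ac I(1) unfolding R_def by auto
    next
      case False
      show ?thesis
      proof (cases "a < k")
        case True
        have "I a < p" using I(2)[OF True] .
        then show ?thesis using False True unfolding R_def by auto
      next
        case False2: False
        have "K (a - k) < K (c - k)" using ac False False2 by (intro K(1)) auto
        then show ?thesis using False False2 unfolding R_def by auto
      qed
    qed
  next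
    fix a assume "a < 2*k"
    then show "R a < 2*p"
    proof (cases "a < k")
      case True
      have "I a < p" by (rule I(2)[OF True])
      then show ?thesis using True unfolding R_def by simp
    next
      case False
      have "K (a - k) < p" using False \<open>a < 2*k\<close> by (intro K(2)) simp
      then show ?thesis using False unfolding R_def by simp
    qed
  qed
  have hG: "\<forall>c<2*k. inM x p m Mx (G c j)" for j
  proof (intro allI impI)
    fix c assume c: "c < 2*k"
    show "inM x p m Mx (G c j)"
    proof (cases "c < k")
      case True then show ?thesis unfolding G_def
        using inM_col[OF J[OF True] hol_germ_nth, where p=p and Mx=Mx and x=x] inM_col1[OF J[OF True], where x=x and p=p and Mx=Mx] by simp
    next
      case False then have "c - k < k" using c by simp
      then show ?thesis unfolding G_def using False inM_col1[OF L[OF \<open>c - k < k\<close>], where x=x and p=p and Mx=Mx] by simp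
    qed
  qed
  have ha: "hol_germ (dg x) (\<lambda>w. \<Prod>c<2*k. \<alpha> c (s c) w)" for s
  proof -
    have h: "hol_germ (dg x) (\<lambda>w. \<alpha> c j w)" for c j
      by (cases "c < k"; cases j) (simp_all add: \<alpha>_def hol_germ_const hol_germ_pr2)
    show ?thesis by (rule hol_germ_prod) (use h in auto)
  qed
  define f where "f = (\<lambda>w::complex^('n+'n). (\<Prod>a<k. pr1 w $ t a - pr2 w $ t a)
          * detk k (\<lambda>a b. Mx (I a) (J b) (pr1 w))
          * detk k (\<lambda>a b. Mx (K a) (L b) (pr2 w)))"
  have key: "f w = (\<Sum>s\<in>PiE {..<2*k} (\<lambda>_. UNIV). (\<Prod>c<2*k. \<alpha> c (s c) w) *
      detk (2*k) (\<lambda>r c. hD p (G c (s c)) w (R r)))" for w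
  proof -
    have m1: "detk (2*k) (\<lambda>r c. \<Sum>j\<in>UNIV. \<alpha> c j w * hD p (G c j) w (R r)) =
       (\<Sum>s\<in>PiE {..<2*k} (\<lambda>_. UNIV). (\<Prod>c<2*k. \<alpha> c (s c) w) *
      detk (2*k) (\<lambda>r c. hD p (G c (s c)) w (R r)))"
      unfolding detk_det using det_multilin[of "UNIV::bool set" "2*k" "\<lambda>c b. \<alpha> c b w"
        "\<lambda>b r c. hD p (G c b) w (R r)"] by simp
    have eqm: "Matrix.mat (2*k) (2*k) (\<lambda>(r,c). \<Sum>j\<in>UNIV. \<alpha> c j w * hD p (G c j) w (R r)) =
       Matrix.mat (2*k) (2*k) (\<lambda>(r,c). if r<k then (if c<k then (pr1 w $ t c - pr2 w $ t c) * Mx (I r) (J c) (pr1 w)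
          else Mx (I r) (L (c-k)) (pr1 w))
     else (if c<k then 0 else Mx (K (r-k)) (L (c-k)) (pr2 w)))"
    proof (rule eq_matI)
      fix r c assume r: "r < dim_row (Matrix.mat (2*k) (2*k) (\<lambda>(r,c). if r<k then (if c<k then (pr1 w $ t c - pr2 w $ t c) * Mx (I r) (J c) (pr1 w)
          else Mx (I r) (L (c-k)) (pr1 w))
     else (if c<k then 0 else Mx (K (r-k)) (L (c-k)) (pr2 w))))"
        and c: "c < dim_col (Matrix.mat (2*k) (2*k) (\<lambda>(r,c). if r<k then (if c<k then (pr1 w $ t c - pr2 w $ t c) * Mx (I r) (J c) (pr1 w)
          else Mx (I r) (L (c-k)) (pr1 w))
     else (if c<k then 0 else Mx (K (r-k)) (L (c-k)) (pr2 w))))"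
      then have r: "r < 2*k" and c: "c < 2*k" by auto
      show "Matrix.mat (2*k) (2*k) (\<lambda>(r,c). \<Sum>j\<in>UNIV. \<alpha> c j w * hD p (G c j) w (R r)) $$ (r, c) =
       Matrix.mat (2*k) (2*k) (\<lambda>(r,c). if r<k then (if c<k then (pr1 w $ t c - pr2 w $ t c) * Mx (I r) (J c) (pr1 w)
          else Mx (I r) (L (c-k)) (pr1 w))
     else (if c<k then 0 else Mx (K (r-k)) (L (c-k)) (pr2 w))) $$ (r, c)"
        using r c I(2)
        by (cases "r < k"; cases "c < k") (auto simp: UNIV_bool \<alpha>_def G_def hD_def R_def algebra_simps)
    qed auto
    have "detk (2*k) (\<lambda>r c. \<Sum>j\<in>UNIV. \<alpha> c j w * hD p (G c j) w (R r)) = f w"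
    proof -
      have b: "Determinant.det (Matrix.mat (2*k) (2*k) (\<lambda>(r,c). if r<k then (if c<k then (pr1 w $ t c - pr2 w $ t c) * Mx (I r) (J c) (pr1 w)
          else Mx (I r) (L (c-k)) (pr1 w))
          else (if c<k then 0 else Mx (K (r-k)) (L (c-k)) (pr2 w)))) =
        Determinant.det (Matrix.mat k k (\<lambda>(r,c). (pr1 w $ t c - pr2 w $ t c) * Mx (I r) (J c) (pr1 w))) *
        Determinant.det (Matrix.mat k k (\<lambda>(r,c). Mx (K r) (L c) (pr2 w)))"
        by (rule det_block[where A="\<lambda>r c. (pr1 w $ t c - pr2 w $ t c) * Mx (I r) (J c) (pr1 w)"
            and B="\<lambda>r c. Mx (I r) (L c) (pr1 w)" and D="\<lambda>r c. Mx (K r) (L c) (pr2 w)"])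
      have c: "Determinant.det (Matrix.mat k k (\<lambda>(r,c). (pr1 w $ t c - pr2 w $ t c) * Mx (I r) (J c) (pr1 w))) =
         (\<Prod>c<k. pr1 w $ t c - pr2 w $ t c) * Determinant.det (Matrix.mat k k (\<lambda>(r,c). Mx (I r) (J c) (pr1 w)))"
        by (rule det_colscale[where d="\<lambda>c. pr1 w $ t c - pr2 w $ t c" and B="\<lambda>r c. Mx (I r) (J c) (pr1 w)"])
      show ?thesis unfolding detk_det eqm b c f_def by (simp add: detk_det)
    qed
    then show ?thesis using m1 by simp
  qed
  have "QI X x p m Mx k (\<lambda>w. \<Sum>s\<in>PiE {..<2*k} (\<lambda>_. UNIV). (\<Prod>c<2*k. \<alpha> c (s c) w) *
      detk (2*k) (\<lambda>r c. hD p (G c (s c)) w (R r)))"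
  proof (rule QI_sum)
    show "finite (PiE {..<2*k} (\<lambda>_. UNIV::bool set))" by (simp add: finite_PiE)
    show "\<forall>s\<in>PiE {..<2*k} (\<lambda>_. UNIV). QI X x p m Mx k (\<lambda>w. (\<Prod>c<2*k. \<alpha> c (s c) w) *
      detk (2*k) (\<lambda>r c. hD p (G c (s c)) w (R r)))"
    proof
      fix s :: "nat \<Rightarrow> bool"
      have "\<forall>c<2*k. inM x p m Mx (G c (s c))" using hG by blast
      then show "QI X x p m Mx k (\<lambda>w. (\<Prod>c<2*k. \<alpha> c (s c) w) *
          detk (2*k) (\<lambda>r c. hD p (G c (s c)) w (R r)))"
        by (rule QI_gen[OF ha hR])
    qed
  qed
  moreover have "f = (\<lambda>w. \<Sum>s\<in>PiE {..<2*k} (\<lambda>_. UNIV). (\<Prod>c<2*k. \<alpha> c (s c) w) *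
      detk (2*k) (\<lambda>r c. hD p (G c (s c)) w (R r)))"
    by (rule ext) (rule key)
  ultimately have "QI X x p m Mx k f" by simp
  then show ?thesis unfolding f_def by (rule QI_in)
qed

end
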